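(* Let $n\ge 2$, let $a_1,\dots,a_n$ be positive integers, let $b\ge 0$ be an integer, and let $M$ be the least common multiple of $a_1,\dots,a_n$ (more generally, $M$ may be taken to be any positive common multiple of $a_1,\dots,a_n$). Put $d_i=M/a_i$ for $i=1,\dots,n$, and $$f(t_1,\dots,t_n)=\frac{1}{M}\Bigl(b-\sum_{i=1}^n a_it_i\Bigr).$$ Let $P(b)$ be the number of $n$-tuples $(x_1,\dots,x_n)$ of non-negative integers with $\sum_{i=1}^n a_ix_i=b$. Then $$P(b)=\sum_{t_1=0}^{d_1-1}\sum_{t_2=0}^{d_2-1}\cdots\sum_{t_n=0}^{d_n-1} C\bigl(f(t_1,\dots,t_n)+1;\,n-1\bigr).$$
   Context: For a real number $k$ and a non-negative integer $l$, define $C(k;l)=\frac{1}{l!}\,k(k+1)\cdots(k+l-1)$ if $k$ is a positive integer (natural number), and $C(k;l)=0$ otherwise (in particular $C(k;l)=0$ whenever $k$ is not an integer or $k\le 0$). *)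

theory Defs
  imports Complex_Main "HOL-Library.FuncSet"
begin

definition Cpoch :: "real \<Rightarrow> nat \<Rightarrow> real" where
  "Cpoch k l = (if k \<in> \<nat> \<and> k > 0 then (\<Prod>j<l. (k + real j)) / fact l else 0)"

definition Pcount :: "nat \<Rightarrow> (nat \<Rightarrow> nat) \<Rightarrow> nat \<Rightarrow> nat" where
  "Pcount n a b = card {x \<in> {..<n} \<rightarrow>\<^sub>E (UNIV :: nat set). (\<Sum>i<n. a i * x i) = b}"

end

theory Submission
  imports Defs
begin

lemma Cpoch_nat: "Cpoch (real k + 1) m = real ((k + m) choose m)"
proof -
  have "real ((k + m) choose m) = real (k+m) gchoose m" by (simp add: binomial_gbinomial)
  also have "\<dots> = pochhammer (real k + 1) m / fact m"
    by (simp add: gbinomial_pochhammer')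
  also have "\<dots> = (\<Prod>j<m. (real k + 1 + real j)) / fact m"
    by (simp add: pochhammer_prod lessThan_atLeast0)
  finally have e: "real ((k + m) choose m) = (\<Prod>j<m. (real k + 1 + real j)) / fact m" .
  have "real k + 1 = real (k+1)" by simp
  then have "real k + 1 \<in> \<nat>" by (metis of_nat_in_Nats)
  moreover have "real k + 1 > 0" by simp
  ultimately show ?thesis unfolding Cpoch_def e by simp
qed

lemma Cpoch_notnat:
  assumes "M > 0" "\<not> (s \<le> b \<and> M dvd (b - s))"
  shows "Cpoch ((real b - real s) / real M + 1) m = 0"
proof (rule ccontr)
  assume "Cpoch ((real b - real s) / real M + 1) m \<noteq> 0"
  then have "(real b - real s) / real M + 1 \<in> \<nat>" "(real b - real s) / real M + 1 > 0"
    unfolding Cpoch_def by (auto split: if_splits)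
  then obtain r where r: "(real b - real s) / real M + 1 = real r" "r > 0"
    by (metis Nats_cases of_nat_0_less_iff)
  then have "real b - real s = real M * real (r - 1)"
    using assms(1) by (simp add: field_simps of_nat_diff)
  then have "b = s + M * (r - 1)"
    by (metis add_diff_cancel_left' diff_add_cancel of_nat_add of_nat_eq_iff of_nat_mult)
  then show False using assms(2) by simp
qed

lemma fiber:
  fixes n :: nat and a :: "nat \<Rightarrow> nat" and b :: nat and M :: nat and t :: "nat \<Rightarrow> nat"
  assumes n1: "n \<ge> 1" and apos: "\<forall>i<n. a i > 0" and Mpos: "M > 0" and adv: "\<forall>i<n. a i dvd M"
    and tT: "t \<in> (\<Pi>\<^sub>E i\<in>{..<n}. {..<M div a i})"
  defines "s \<equiv> (\<Sum>i<n. a i * t i)"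
  defines "F \<equiv> {x \<in> {x \<in> {..<n} \<rightarrow>\<^sub>E (UNIV :: nat set). (\<Sum>i<n. a i * x i) = b}.
                  (\<lambda>i. if i < n then x i mod (M div a i) else undefined) = t}"
  shows "real (card F) = Cpoch ((real b - real s) / real M + 1) (n - 1)"
proof -
  define d where "d i = M div a i" for i
  have ad: "a i * d i = M" if "i < n" for i
    using apos adv that unfolding d_def by auto
  have dpos: "d i > 0" if "i < n" for i
    using ad[OF that] Mpos by (metis mult_0_right neq0_conv)
  have tlt: "t i < d i" if "i<n" for i using tT that unfolding d_def by auto
  have tout: "t i = undefined" if "i \<ge> n" for i using PiE_arb[OF tT] that by simp
  have key: "(\<Sum>i<n. a i * (t i + d i * y i)) = s + M * (\<Sum>i<n. y i)" for y
  proof -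
    have "(\<Sum>i<n. a i * (t i + d i * y i)) = (\<Sum>i<n. a i * t i + M * y i)"
    proof (rule sum.cong)
      fix i assume "i \<in> {..<n}"
      then have "a i * (d i * y i) = M * y i" using ad[of i] by (simp add: mult.assoc[symmetric])
      then show "a i * (t i + d i * y i) = a i * t i + M * y i" by (simp add: distrib_left)
    qed simp
    also have "\<dots> = s + M * (\<Sum>i<n. y i)" by (simp add: s_def sum.distrib sum_distrib_left)
    finally show ?thesis .
  qed
  have decomp: "x i = t i + d i * (x i div d i)" if "x \<in> F" "i < n" for x i
  proof -
    have "(\<lambda>i. if i < n then x i mod (M div a i) else undefined) = t" using that(1) unfolding F_def by blast
    from fun_cong[OF this, of i] have "x i mod d i = t i" using that(2) by (simp add: d_def)
    then show ?thesis by (metis mod_div_mult_eq add.commute mult.commute)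
  qed
  have xsum: "b = s + M * (\<Sum>i<n. x i div d i)" if "x \<in> F" for x
  proof -
    have "b = (\<Sum>i<n. a i * x i)" using that unfolding F_def by auto
    also have "\<dots> = (\<Sum>i<n. a i * (t i + d i * (x i div d i)))"
      by (rule sum.cong) (use decomp[OF that] in auto)
    finally show ?thesis using key by simp
  qed
  show ?thesis
  proof (cases "s \<le> b \<and> M dvd (b - s)")
    case False
    have "F = {}"
    proof (rule ccontr)
      assume "F \<noteq> {}" then obtain x where "x \<in> F" by auto
      from xsum[OF this] False show False by auto
    qed
    then show ?thesis using Cpoch_notnat[OF Mpos False] by simp
  next
    case True
    define k where "k = (b - s) div M"
    have bk: "b = s + M * k" using True unfolding k_def by auto
    define L where "L = {l::nat list. length l = n \<and> sum_list l = k}"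
    define \<psi> where "\<psi> l = (\<lambda>i. if i < n then t i + d i * l ! i else undefined)" for l :: "nat list"
    have sl: "sum_list l = (\<Sum>i<n. l ! i)" if "length l = n" for l :: "nat list"
      using that by (simp add: sum_list_sum_nth lessThan_atLeast0)
    have inj: "inj_on \<psi> L"
    proof (rule inj_onI)
      fix l l' assume l: "l \<in> L" "l' \<in> L" "\<psi> l = \<psi> l'"
      show "l = l'"
      proof (rule nth_equalityI)
        show "length l = length l'" using l by (simp add: L_def)
        fix i assume "i < length l"
        then have i: "i < n" using l by (simp add: L_def)
        have "t i + d i * l ! i = t i + d i * l' ! i"
          using fun_cong[OF l(3), of i] i by (simp add: \<psi>_def)
        then show "l ! i = l' ! i" using dpos[OF i] by simp
      qed
    qed
    have img: "F = \<psi> ` L"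
    proof
      show "\<psi> ` L \<subseteq> F"
      proof
        fix x assume "x \<in> \<psi> ` L"
        then obtain l where l: "l \<in> L" "x = \<psi> l" by auto
        have "(\<Sum>i<n. a i * x i) = (\<Sum>i<n. a i * (t i + d i * l ! i))"
          by (rule sum.cong) (auto simp: l \<psi>_def)
        also have "\<dots> = b" using key[of "\<lambda>i. l ! i"] sl[of l] l bk by (simp add: L_def)
        finally have 1: "(\<Sum>i<n. a i * x i) = b" .
        have 2: "x \<in> {..<n} \<rightarrow>\<^sub>E UNIV" using l by (auto simp: \<psi>_def split: if_splits)
        have 3: "(\<lambda>i. if i < n then x i mod (M div a i) else undefined) = t"
        proof
          fix i show "(if i < n then x i mod (M div a i) else undefined) = t i"
            using tlt tout by (auto simp: l \<psi>_def d_def[symmetric])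
        qed
        show "x \<in> F" using 1 2 3 unfolding F_def by auto
      qed
    next
      show "F \<subseteq> \<psi> ` L"
      proof
        fix x assume x: "x \<in> F"
        define l where "l = map (\<lambda>i. x i div d i) [0..<n]"
        have len: "length l = n" by (simp add: l_def)
        have "(\<Sum>i<n. l ! i) = (\<Sum>i<n. x i div d i)"
          by (rule sum.cong) (auto simp: l_def)
        then have "sum_list l = k" using xsum[OF x] bk sl[OF len] Mpos by simp
        then have lL: "l \<in> L" using len by (simp add: L_def)
        have xPi: "x \<in> {..<n} \<rightarrow>\<^sub>E UNIV" using x unfolding F_def by auto
        have "x = \<psi> l"
        proof
          fix i show "x i = \<psi> l i"
            using decomp[OF x, of i] xPi by (cases "i < n") (auto simp: \<psi>_def l_def)
        qed
        then show "x \<in> \<psi> ` L" using lL by auto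
      qed
    qed
    have "card F = card L" using img inj by (simp add: card_image)
    also have "\<dots> = (k + n - 1) choose k" unfolding L_def by (rule card_length_sum_list)
    also have "\<dots> = (k + (n - 1)) choose (n - 1)"
      using binomial_symmetric[of k "k + (n - 1)"] n1 by simp
    finally have c: "card F = (k + (n - 1)) choose (n - 1)" .
    have "(real b - real s) / real M = real k" using bk Mpos by (simp add: field_simps)
    then show ?thesis using c Cpoch_nat[of k "n-1"] by simp
  qed
qed

theorem mainTheorem1:
  fixes n :: nat and a :: "nat \<Rightarrow> nat" and b :: nat and M :: nat
  assumes "n \<ge> 2"
    and "\<forall>i<n. a i > 0"
    and "M > 0"
    and "\<forall>i<n. a i dvd M"
  shows "real (Pcount n a b) =
    (\<Sum>t \<in> (\<Pi>\<^sub>E i\<in>{..<n}. {..<M div a i}).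
       Cpoch ((real b - (\<Sum>i<n. real (a i) * real (t i))) / real M + 1) (n - 1))"
proof -
  define E where "E = {x \<in> {..<n} \<rightarrow>\<^sub>E (UNIV :: nat set). (\<Sum>i<n. a i * x i) = b}"
  define T where "T = (\<Pi>\<^sub>E i\<in>{..<n}. {..<M div a i})"
  define g where "g x = (\<lambda>i. if i < n then x i mod (M div a i) else undefined)" for x :: "nat \<Rightarrow> nat"
  have sub: "E \<subseteq> {..<n} \<rightarrow>\<^sub>E {..b}"
  proof
    fix x assume x: "x \<in> E"
    have "x i \<le> b" if i: "i < n" for i
    proof -
      have "a i * x i \<le> (\<Sum>i<n. a i * x i)"
        by (rule member_le_sum) (use i in auto)
      also have "\<dots> = b" using x by (simp add: E_def)
      finally have "a i * x i \<le> b" .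
      moreover have "x i \<le> a i * x i" using assms(2) i by (simp add: Suc_le_eq)
      ultimately show ?thesis by linarith
    qed
    then show "x \<in> {..<n} \<rightarrow>\<^sub>E {..b}" using x by (auto simp: E_def)
  qed
  have finE: "finite E" by (rule finite_subset[OF sub]) (simp add: finite_PiE)
  have finT: "finite T" by (simp add: T_def finite_PiE)
  have gT: "g ` E \<subseteq> T"
  proof
    fix y assume "y \<in> g ` E"
    then obtain x where y: "y = g x" by auto
    show "y \<in> T" unfolding T_def y
    proof (rule PiE_I)
      fix i assume "i \<in> {..<n}"
      then have i: "i < n" by simp
      have "M div a i > 0" using assms(2-4) i
        by (metis dvd_div_eq_0_iff neq0_conv not_less0)
      then show "g x i \<in> {..<M div a i}" using i by (simp add: g_def)
    next
      fix i assume "i \<notin> {..<n}"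
      then show "g x i = undefined" by (simp add: g_def)
    qed
  qed
  have "(\<Sum>t\<in>T. card {x \<in> E. g x = t}) = (\<Sum>t\<in>T. \<Sum>x\<in>{x \<in> E. g x = t}. (1::nat))"
    by simp
  also have "\<dots> = (\<Sum>x\<in>E. (1::nat))" by (rule sum.group[OF finE finT gT])
  also have "\<dots> = card E" by simp
  finally have "card E = (\<Sum>t\<in>T. card {x \<in> E. g x = t})" by simp
  then have "real (Pcount n a b) = (\<Sum>t\<in>T. real (card {x \<in> E. g x = t}))"
    by (simp add: Pcount_def E_def)
  also have "\<dots> = (\<Sum>t\<in>T. Cpoch ((real b - (\<Sum>i<n. real (a i) * real (t i))) / real M + 1) (n - 1))"
  proof (rule sum.cong)
    fix t assume tT: "t \<in> T"
    have "real (card {x \<in> E. g x = t}) =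
      Cpoch ((real b - real (\<Sum>i<n. a i * t i)) / real M + 1) (n - 1)"
      unfolding E_def g_def
      by (rule fiber[of n a M t b]) (use assms tT in \<open>auto simp: T_def\<close>)
    then show "real (card {x \<in> E. g x = t}) =
      Cpoch ((real b - (\<Sum>i<n. real (a i) * real (t i))) / real M + 1) (n - 1)"
      by (simp add: of_nat_sum)
  qed simp
  finally show ?thesis by (simp add: T_def)
qed

end
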